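(* For an American option $\xi$ and $j\in\{1,\ldots,d\}$, \[ \pi^{\mathrm{bg}}_j(\xi)=\max_{\chi\in\mathcal{X}}\ \min_{(\mathbb{Q},S)\in\bar{\mathcal{P}}_j}\mathbb{E}_{\mathbb{Q}}\big((\xi\cdot S)_\chi\big), \] and there exist $\hat\chi\in\mathcal{X}$ and $(\hat{\mathbb{Q}},\hat S)\in\bar{\mathcal{P}}_j$ such that \[ \pi^{\mathrm{bg}}_j(\xi)=\mathbb{E}_{\hat{\mathbb{Q}}}\big((\xi\cdot\hat S)_{\hat\chi}\big)=\min_{(\mathbb{Q},S)\in\bar{\mathcal{P}}_j}\mathbb{E}_{\mathbb{Q}}\big((\xi\cdot S)_{\hat\chi}\big). \]
   Context: Finite filtered probability space $(\Omega,\mathcal{F},\mathbb{P};(\mathcal{F}_t)_{t=0}^T)$, $\mathcal{F}_0$ trivial, $\mathcal{F}_T=2^\Omega$, $\mathbb{P}(\{\omega\})>0$. $\Omega_t$: atoms of $\mathcal{F}_t$. $\mathcal{L}_t$: $\mathcal{F}_t$-measurable $\mathbb{R}^d$-valued random variables. $d$ assets, $\mathcal{F}_t$-measurable exchange rates $\pi^{jk}_t>0$, $\pi^{jj}_t=1$. $\mathcal{K}^\mu_t$ ($\mu\in\Omega_t$): convex cone generated by $e^1,\ldots,e^d$ and $\pi^{jk}_t(\mu)e^j-e^k$; $\mathcal{K}_t=\{x\in\mathcal{L}_t:x(\mu)\in\mathcal{K}^\mu_t\ \forall\mu\}$. For a cone $A$, $A^\ast=\{y:y\cdot x\ge0\ \forall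 x\in A\}$; "$S_t\in\mathcal{K}^\ast_t\setminus\{0\}$" means $S_t(\mu)\in(\mathcal{K}^\mu_t)^\ast\setminus\{0\}$ for all $\mu\in\Omega_t$. Trading strategies $\Phi$: $y_0\in\mathbb{R}^d$, $y_t\in\mathcal{L}_{t-1}$, $y_{T+1}=0$. Mixed stopping times $\mathcal{X}$: adapted $[0,1]$-valued $\chi$ with $\sum_t\chi_t=1$. $(\xi\cdot S)_\chi=\sum_{t=0}^T\chi_t\,\xi_t\cdot S_t$. American option: adapted $\mathbb{R}^d$-valued $\xi$. $\Phi^{\mathrm{bg}}(\xi)$: pairs $(y,\chi)\in\Phi\times\mathcal{X}$ with $y_t+\chi_t\xi_t-y_{t+1}\in\mathcal{K}_t$ for $t=0,\ldots,T$. $\pi^{\mathrm{bg}}_j(\xi)=\sup\{-x\in\mathbb{R}:\exists(y,\chi)\in\Phi^{\mathrm{bg}}(\xi),\ xe^j=y_0\}$. $\bar{\mathcal{P}}_j$: the set of pairs $(\mathbb{Q},S)$ where $\mathbb{Q}$ is a probability measure on $\Omega$ absolutely continuous with respect to $\mathbb{P}$ and $S=(S_t)_{t=0}^T$ is an $\mathbb{R}^d$-valued $\mathbb{Q}$-martingale with $S_t\in\mathcal{K}^\ast_t\setminus\{0\}$ and $S^j_t=1$ for all $t$. Standing assumption: no arbitrage (no $y\in\Phi$ with $y_0=0$, $y_t-y_{t+1}\in\mathcal{K}_t$ for $t<T$ and $y_T-x\in\mathcal{K}_T$ for a nonzero componentwise non-negative $x\in\mathcal{L}_T$). *)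

theory Defs
  imports "HOL-Analysis.Analysis" "HOL-Library.Disjoint_Sets"
begin

(* Finite sample space: the finite type 'w (Omega = UNIV).
   Filtration: F t is the set of atoms Omega_t of F_t (a partition of Omega).
   Assets are indexed by the finite type 'd; vectors are real^'d. *)

definition filtration :: "nat \<Rightarrow> (nat \<Rightarrow> 'w set set) \<Rightarrow> bool" where
  "filtration T F \<longleftrightarrow>
     (\<forall>t\<le>T. partition_on UNIV (F t)) \<and>
     (\<forall>t<T. \<forall>B\<in>F (Suc t). \<exists>A\<in>F t. B \<subseteq> A) \<and>
     F 0 = {UNIV} \<and> F T = {{w} | w. True}"

definition meas :: "(nat \<Rightarrow> 'w set set) \<Rightarrow> nat \<Rightarrow> ('w \<Rightarrow> 'b) \<Rightarrow> bool" where
  "meas F t X \<longleftrightarrow> (\<forall>A\<in>F t. \<forall>w\<in>A. \<forall>w'\<in>A. X w = X w')"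

definition exchange_rates :: "nat \<Rightarrow> (nat \<Rightarrow> 'w set set) \<Rightarrow> (nat \<Rightarrow> 'w \<Rightarrow> 'd \<Rightarrow> 'd \<Rightarrow> real) \<Rightarrow> bool" where
  "exchange_rates T F rate \<longleftrightarrow>
     (\<forall>t\<le>T. meas F t (rate t) \<and> (\<forall>w j k. rate t w j k > 0) \<and> (\<forall>w j. rate t w j j = 1))"

definition coneK :: "(nat \<Rightarrow> 'w \<Rightarrow> 'd::finite \<Rightarrow> 'd \<Rightarrow> real) \<Rightarrow> nat \<Rightarrow> 'w \<Rightarrow> (real^'d) set" where
  "coneK rate t w = convex_cone hull
     ({axis i 1 | i. True} \<union> {rate t w j k *\<^sub>R axis j 1 - axis k 1 | j k. True})"

definition inK :: "(nat \<Rightarrow> 'w set set) \<Rightarrow> (nat \<Rightarrow> 'w \<Rightarrow> 'd::finite \<Rightarrow> 'd \<Rightarrow> real) \<Rightarrow> nat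
                   \<Rightarrow> ('w \<Rightarrow> real^'d) \<Rightarrow> bool" where
  "inK F rate t x \<longleftrightarrow> meas F t x \<and> (\<forall>w. x w \<in> coneK rate t w)"

definition dual_cone :: "(real^'d) set \<Rightarrow> (real^'d) set" where
  "dual_cone A = {y. \<forall>x\<in>A. 0 \<le> y \<bullet> x}"

definition trading_strategy :: "nat \<Rightarrow> (nat \<Rightarrow> 'w set set) \<Rightarrow> (nat \<Rightarrow> 'w \<Rightarrow> real^'d) \<Rightarrow> bool" where
  "trading_strategy T F y \<longleftrightarrow>
     (\<forall>w w'. y 0 w = y 0 w') \<and> (\<forall>t. 1 \<le> t \<and> t \<le> T \<longrightarrow> meas F (t - 1) (y t)) \<and>
     (\<forall>w. y (Suc T) w = 0)"

definition mixed_stopping :: "nat \<Rightarrow> (nat \<Rightarrow> 'w set set) \<Rightarrow> (nat \<Rightarrow> 'w \<Rightarrow> real) \<Rightarrow> bool" where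
  "mixed_stopping T F chi \<longleftrightarrow>
     (\<forall>t\<le>T. meas F t (chi t) \<and> (\<forall>w. 0 \<le> chi t w \<and> chi t w \<le> 1)) \<and>
     (\<forall>w. (\<Sum>t\<le>T. chi t w) = 1)"

definition american_option :: "nat \<Rightarrow> (nat \<Rightarrow> 'w set set) \<Rightarrow> (nat \<Rightarrow> 'w \<Rightarrow> real^'d) \<Rightarrow> bool" where
  "american_option T F xi \<longleftrightarrow> (\<forall>t\<le>T. meas F t (xi t))"

definition stopped_payoff :: "nat \<Rightarrow> (nat \<Rightarrow> 'w \<Rightarrow> real^'d) \<Rightarrow> (nat \<Rightarrow> 'w \<Rightarrow> real^'d)
                              \<Rightarrow> (nat \<Rightarrow> 'w \<Rightarrow> real) \<Rightarrow> 'w \<Rightarrow> real" where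
  "stopped_payoff T xi S chi w = (\<Sum>t\<le>T. chi t w * (xi t w \<bullet> S t w))"

definition expect :: "('w::finite \<Rightarrow> real) \<Rightarrow> ('w \<Rightarrow> real) \<Rightarrow> real" where
  "expect Q X = (\<Sum>w\<in>UNIV. Q w * X w)"

definition Phi_bg :: "nat \<Rightarrow> (nat \<Rightarrow> 'w set set) \<Rightarrow> (nat \<Rightarrow> 'w \<Rightarrow> 'd::finite \<Rightarrow> 'd \<Rightarrow> real)
                      \<Rightarrow> (nat \<Rightarrow> 'w \<Rightarrow> real^'d) \<Rightarrow> (nat \<Rightarrow> 'w \<Rightarrow> real^'d) \<Rightarrow> (nat \<Rightarrow> 'w \<Rightarrow> real) \<Rightarrow> bool" where
  "Phi_bg T F rate xi y chi \<longleftrightarrow> trading_strategy T F y \<and> mixed_stopping T F chi \<and>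
     (\<forall>t\<le>T. inK F rate t (\<lambda>w. y t w + chi t w *\<^sub>R xi t w - y (Suc t) w))"

definition pi_bg_set :: "nat \<Rightarrow> (nat \<Rightarrow> 'w set set) \<Rightarrow> (nat \<Rightarrow> 'w \<Rightarrow> 'd::finite \<Rightarrow> 'd \<Rightarrow> real)
                     \<Rightarrow> (nat \<Rightarrow> 'w \<Rightarrow> real^'d) \<Rightarrow> 'd \<Rightarrow> real set" where
  "pi_bg_set T F rate xi j = {- x | x. \<exists>y chi. Phi_bg T F rate xi y chi \<and> (\<forall>w. y 0 w = x *\<^sub>R axis j 1)}"

definition pi_bg :: "nat \<Rightarrow> (nat \<Rightarrow> 'w set set) \<Rightarrow> (nat \<Rightarrow> 'w \<Rightarrow> 'd::finite \<Rightarrow> 'd \<Rightarrow> real)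
                     \<Rightarrow> (nat \<Rightarrow> 'w \<Rightarrow> real^'d) \<Rightarrow> 'd \<Rightarrow> real" where
  "pi_bg T F rate xi j = Sup (pi_bg_set T F rate xi j)"

definition prob_ac :: "('w::finite \<Rightarrow> real) \<Rightarrow> ('w \<Rightarrow> real) \<Rightarrow> bool" where
  "prob_ac P Q \<longleftrightarrow> (\<forall>w. 0 \<le> Q w) \<and> (\<Sum>w\<in>UNIV. Q w) = 1 \<and> (\<forall>w. P w = 0 \<longrightarrow> Q w = 0)"

definition martingale :: "nat \<Rightarrow> (nat \<Rightarrow> 'w set set) \<Rightarrow> ('w::finite \<Rightarrow> real) \<Rightarrow> (nat \<Rightarrow> 'w \<Rightarrow> real^'d) \<Rightarrow> bool" where
  "martingale T F Q S \<longleftrightarrow> (\<forall>t\<le>T. meas F t (S t)) \<and>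
     (\<forall>t<T. \<forall>A\<in>F t. (\<Sum>w\<in>A. Q w *\<^sub>R S (Suc t) w) = (\<Sum>w\<in>A. Q w *\<^sub>R S t w))"

definition Pbar :: "nat \<Rightarrow> (nat \<Rightarrow> 'w set set) \<Rightarrow> (nat \<Rightarrow> 'w \<Rightarrow> 'd::finite \<Rightarrow> 'd \<Rightarrow> real) \<Rightarrow> ('w::finite \<Rightarrow> real)
                    \<Rightarrow> 'd \<Rightarrow> ('w \<Rightarrow> real) \<Rightarrow> (nat \<Rightarrow> 'w \<Rightarrow> real^'d) \<Rightarrow> bool" where
  "Pbar T F rate P j Q S \<longleftrightarrow> prob_ac P Q \<and> martingale T F Q S \<and>
     (\<forall>t\<le>T. \<forall>w. S t w \<in> dual_cone (coneK rate t w) - {0} \<and> S t w $ j = 1)"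

definition no_arbitrage :: "nat \<Rightarrow> (nat \<Rightarrow> 'w set set) \<Rightarrow> (nat \<Rightarrow> 'w \<Rightarrow> 'd::finite \<Rightarrow> 'd \<Rightarrow> real) \<Rightarrow> bool" where
  "no_arbitrage T F rate \<longleftrightarrow> \<not> (\<exists>y x. trading_strategy T F y \<and> (\<forall>w. y 0 w = 0) \<and>
     (\<forall>t<T. inK F rate t (\<lambda>w. y t w - y (Suc t) w)) \<and>
     meas F T x \<and> (\<forall>w i. 0 \<le> x w $ i) \<and> x \<noteq> (\<lambda>w. 0) \<and>
     inK F rate T (\<lambda>w. y T w - x w))"

end

theory Submission
  imports Defs
begin


locale mkt =
  fixes T :: nat and F :: "nat \<Rightarrow> ('w::finite) set set" and P :: "'w \<Rightarrow> real"
    and rate :: "nat \<Rightarrow> 'w \<Rightarrow> 'd::finite \<Rightarrow> 'd \<Rightarrow> real"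
    and xi :: "nat \<Rightarrow> 'w \<Rightarrow> real^'d" and j :: 'd
  assumes filt: "filtration T F"
    and Ppos: "\<forall>w. P w > 0"
    and er: "exchange_rates T F rate"
    and na: "no_arbitrage T F rate"
    and ao: "american_option T F xi"
begin

lemma part: "t \<le> T \<Longrightarrow> partition_on UNIV (F t)"
  using filt by (simp add: filtration_def)

lemma FT: "F T = {{w} | w. True}"
  using filt by (simp add: filtration_def)

lemma F0: "F 0 = {UNIV}"
  using filt by (simp add: filtration_def)

lemma atom_ex: "t \<le> T \<Longrightarrow> \<exists>A\<in>F t. w \<in> A"
  using part[of t] unfolding partition_on_def by blast

lemma atom_uniq: "t \<le> T \<Longrightarrow> A \<in> F t \<Longrightarrow> B \<in> F t \<Longrightarrow> w \<in> A \<Longrightarrow> w \<in> B \<Longrightarrow> A = B"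
  using part[of t] unfolding partition_on_def disjoint_def by blast

definition atom where "atom t w = (THE A. A \<in> F t \<and> w \<in> A)"

lemma atom: "t \<le> T \<Longrightarrow> atom t w \<in> F t \<and> w \<in> atom t w"
  unfolding atom_def
  by (rule theI') (use atom_ex atom_uniq in blast)

lemma atom_eq: "t \<le> T \<Longrightarrow> A \<in> F t \<Longrightarrow> w \<in> A \<Longrightarrow> atom t w = A"
  using atom atom_uniq by blast

lemma measD: "meas F t X \<Longrightarrow> t \<le> T \<Longrightarrow> A \<in> F t \<Longrightarrow> w \<in> A \<Longrightarrow> w' \<in> A \<Longrightarrow> X w = X w'"
  unfolding meas_def by blast

lemma refine: "t \<le> s \<Longrightarrow> s \<le> T \<Longrightarrow> B \<in> F s \<Longrightarrow> \<exists>A\<in>F t. B \<subseteq> A"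
proof (induction s arbitrary: B)
  case 0 then show ?case by auto
next
  case (Suc s)
  show ?case
  proof (cases "t = Suc s")
    case True then show ?thesis using Suc by auto
  next
    case False
    then have "t \<le> s" using Suc by auto
    from Suc.prems filt obtain A' where "A' \<in> F s" "B \<subseteq> A'"
      unfolding filtration_def by (metis Suc_le_lessD)
    with Suc.IH[OF \<open>t \<le> s\<close>] Suc.prems show ?thesis by (meson Suc_leD order_trans)
  qed
qed

lemma meas_mono: "meas F t X \<Longrightarrow> t \<le> s \<Longrightarrow> s \<le> T \<Longrightarrow> meas F s X"
  unfolding meas_def by (metis refine subsetD)

lemma meas_T: "meas F T X"
  unfolding meas_def FT by auto

lemma sum_part: "t \<le> T \<Longrightarrow> (\<Sum>w\<in>UNIV. f w) = (\<Sum>A\<in>F t. \<Sum>w\<in>A. f w)"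
proof -
  assume t: "t \<le> T"
  have "(\<Sum>w\<in>\<Union>(F t). f w) = (\<Sum>A\<in>F t. \<Sum>w\<in>A. f w)"
    by (rule sum.Union_disjoint[simplified]) (use atom_uniq[OF t] in auto)
  moreover have "\<Union>(F t) = UNIV" using part[OF t] unfolding partition_on_def by blast
  ultimately show ?thesis by simp
qed

lemma sum_refine:
  assumes "t < T" "A \<in> F t"
  shows "(\<Sum>w\<in>A. f w) = (\<Sum>B\<in>{B\<in>F (Suc t). B \<subseteq> A}. \<Sum>w\<in>B. f w)"
proof -
  have "(\<Sum>w\<in>\<Union>{B\<in>F (Suc t). B \<subseteq> A}. f w) = (\<Sum>B\<in>{B\<in>F (Suc t). B \<subseteq> A}. \<Sum>w\<in>B. f w)"
    by (rule sum.Union_disjoint[simplified]) (use atom_uniq[of "Suc t"] assms in auto)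
  moreover have "\<Union>{B\<in>F (Suc t). B \<subseteq> A} = A"
  proof
    show "A \<subseteq> \<Union>{B\<in>F (Suc t). B \<subseteq> A}"
    proof
      fix w assume w: "w \<in> A"
      obtain B where B: "B \<in> F (Suc t)" "w \<in> B" using atom_ex[of "Suc t" w] assms by auto
      obtain A' where "A' \<in> F t" "B \<subseteq> A'" using refine[of t "Suc t" B] B assms by auto
      then have "A' = A" using atom_uniq[of t A' A w] w B assms by auto
      then show "w \<in> \<Union>{B\<in>F (Suc t). B \<subseteq> A}" using B \<open>B \<subseteq> A'\<close> by auto
    qed
  qed auto
  ultimately show ?thesis by simp
qed


definition gens :: "nat \<Rightarrow> 'w \<Rightarrow> (real^'d) set" where
  "gens t w = ({axis i 1 | i. True} \<union> {rate t w a b *\<^sub>R axis a 1 - axis b 1 | a b. True})"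

lemma coneK_gens: "coneK rate t w = convex_cone hull gens t w"
  unfolding coneK_def gens_def ..

lemma finite_gens: "finite (gens t w)"
proof -
  have e1: "{axis i (1::real) | i. True} = range (\<lambda>i. axis i 1)" by auto
  have e2: "{rate t w a b *\<^sub>R axis a 1 - axis b 1 | a b. True}
      = range (\<lambda>(a,b). rate t w a b *\<^sub>R axis a (1::real) - axis b 1)" by auto
  show ?thesis unfolding gens_def e1 e2 by (intro finite_UnI finite_imageI finite)
qed

lemma coneK_cc: "convex_cone (coneK rate t w)"
  unfolding coneK_def by (rule convex_cone_convex_cone_hull)

lemma coneK_0: "0 \<in> coneK rate t w"
  by (simp add: coneK_cc convex_cone_contains_0)

lemma coneK_add: "x \<in> coneK rate t w \<Longrightarrow> y \<in> coneK rate t w \<Longrightarrow> x + y \<in> coneK rate t w"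
  by (simp add: coneK_cc convex_cone_add)

lemma coneK_scale: "x \<in> coneK rate t w \<Longrightarrow> 0 \<le> c \<Longrightarrow> c *\<^sub>R x \<in> coneK rate t w"
  by (simp add: coneK_cc convex_cone_scaleR)

lemma axis_coneK: "axis i 1 \<in> coneK rate t w"
  unfolding coneK_def by (rule hull_inc) auto

lemma rate_coneK: "rate t w a b *\<^sub>R axis a 1 - axis b 1 \<in> coneK rate t w"
  unfolding coneK_def by (rule hull_inc) auto

lemma coneK_atom: "t \<le> T \<Longrightarrow> A \<in> F t \<Longrightarrow> w \<in> A \<Longrightarrow> w' \<in> A \<Longrightarrow> coneK rate t w' = coneK rate t w"
proof -
  assume "t \<le> T" "A \<in> F t" "w \<in> A" "w' \<in> A"
  moreover have "meas F t (rate t)" using er \<open>t \<le> T\<close> by (simp add: exchange_rates_def)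
  ultimately have "rate t w' = rate t w" using measD by metis
  then show ?thesis unfolding coneK_def by simp
qed

lemma dc_nonneg: "s \<in> dual_cone (coneK rate t w) \<Longrightarrow> 0 \<le> s $ i"
  using axis_coneK[of i t w] unfolding dual_cone_def by (auto simp: inner_axis)

lemma dc_zero: "s \<in> dual_cone (coneK rate t w) \<Longrightarrow> s $ j = 0 \<Longrightarrow> s = 0"
proof -
  assume s: "s \<in> dual_cone (coneK rate t w)" and sj: "s $ j = 0"
  have "s $ k = 0" for k
  proof -
    have "0 \<le> s \<bullet> (rate t w j k *\<^sub>R axis j 1 - axis k 1)"
      using s rate_coneK unfolding dual_cone_def by blast
    then have "s $ k \<le> 0" using sj by (simp add: inner_diff_right inner_axis)
    then show ?thesis using dc_nonneg[OF s, of k] by simp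
  qed
  then show ?thesis by (simp add: vec_eq_iff)
qed

lemma dc_scale: "s \<in> dual_cone K \<Longrightarrow> 0 \<le> c \<Longrightarrow> c *\<^sub>R s \<in> dual_cone K"
  unfolding dual_cone_def by auto

lemma meas2: assumes "meas F t x" "meas F t y" shows "meas F t (\<lambda>w. f (x w) (y w))"
  unfolding meas_def
proof (intro ballI)
  fix A w w' assume "A \<in> F t" "w \<in> A" "w' \<in> A"
  then have "x w = x w'" "y w = y w'" using assms unfolding meas_def by blast+
  then show "f (x w) (y w) = f (x w') (y w')" by simp
qed

lemma meas1: assumes "meas F t x" shows "meas F t (\<lambda>w. f (x w))"
  using meas2[OF assms assms, of "\<lambda>a b. f a"] by simp

lemma meas_const: "meas F t (\<lambda>w. c)"
  unfolding meas_def by simp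

lemma inK_add: assumes "inK F rate t x" "inK F rate t y" shows "inK F rate t (\<lambda>w. x w + y w)"
proof -
  have "meas F t (\<lambda>w. x w + y w)" using assms meas2[of t x y "(+)"] unfolding inK_def by simp
  moreover have "x w + y w \<in> coneK rate t w" for w
    using assms unfolding inK_def by (intro coneK_add) auto
  ultimately show ?thesis unfolding inK_def by simp
qed

lemma inK_scale: assumes "inK F rate t x" "0 \<le> c" shows "inK F rate t (\<lambda>w. c *\<^sub>R x w)"
proof -
  have "meas F t (\<lambda>w. c *\<^sub>R x w)" using assms meas1[of t x "\<lambda>v. c *\<^sub>R v"] unfolding inK_def by simp
  moreover have "c *\<^sub>R x w \<in> coneK rate t w" for w
    using assms unfolding inK_def by (intro coneK_scale) auto
  ultimately show ?thesis unfolding inK_def by simp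
qed

lemma inK_zero: "inK F rate t (\<lambda>w. 0)"
  unfolding inK_def by (simp add: meas_const coneK_0)

lemma cc_sum:
  assumes S: "convex_cone S" and I: "finite I" and f: "\<And>i. i \<in> I \<Longrightarrow> f i \<in> S"
  shows "sum f I \<in> S"
  using I f by (induction I rule: finite_induct) (auto simp: convex_cone_contains_0[OF S] convex_cone_add[OF S])

definition lift :: "'w set \<Rightarrow> real^'d \<Rightarrow> real^'d^'w" where
  "lift A v = (\<chi> w. if w \<in> A then v else 0)"

lemma linear_lift: "linear (lift A)"
  by (rule linearI) (auto simp: lift_def vec_eq_iff)

lemma lift_inK:
  assumes "t \<le> T" "A \<in> F t" "w0 \<in> A" "c \<in> coneK rate t w0"
  shows "inK F rate t (\<lambda>w. if w \<in> A then c else 0)"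
  unfolding inK_def
proof
  show "meas F t (\<lambda>w. if w \<in> A then c else 0)"
    unfolding meas_def
  proof (intro ballI)
    fix B w w' assume "B \<in> F t" "w \<in> B" "w' \<in> B"
    then have "w \<in> A \<longleftrightarrow> w' \<in> A" using atom_uniq[OF assms(1) assms(2)] by blast
    then show "(if w \<in> A then c else 0) = (if w' \<in> A then c else 0)" by simp
  qed
  show "\<forall>w. (if w \<in> A then c else 0) \<in> coneK rate t w"
  proof
    fix w show "(if w \<in> A then c else 0) \<in> coneK rate t w"
    proof (cases "w \<in> A")
      case True
      then have "coneK rate t w = coneK rate t w0" using coneK_atom[OF assms(1,2,3) True] by simp
      then show ?thesis using True assms(4) by simp
    qed (simp add: coneK_0)
  qed
qed

definition Aset :: "(real^'d^'w) set" where
  "Aset = {(\<chi> w. \<Sum>t\<le>T. k t w) | k. \<forall>t\<le>T. inK F rate t (k t)}"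

lemma single_in_A: "t \<le> T \<Longrightarrow> inK F rate t f \<Longrightarrow> (\<chi> w. f w) \<in> Aset"
proof -
  assume t: "t \<le> T" and f: "inK F rate t f"
  define k where "k = (\<lambda>s. if s = t then f else (\<lambda>w. 0))"
  have "\<forall>s\<le>T. inK F rate s (k s)" using f inK_zero by (auto simp: k_def)
  moreover have "(\<Sum>s\<le>T. k s w) = f w" for w
  proof -
    have "(\<Sum>s\<le>T. k s w) = (\<Sum>s\<le>T. if s = t then f w else 0)"
      by (rule sum.cong) (auto simp: k_def)
    also have "\<dots> = f w" using t by simp
    finally show ?thesis .
  qed
  ultimately show ?thesis unfolding Aset_def
    by (intro CollectI exI[of _ k] conjI) auto
qed

lemma AsetE: "x \<in> Aset \<Longrightarrow> (\<And>k. x = (\<chi> w. \<Sum>t\<le>T. k t w) \<Longrightarrow> \<forall>t\<le>T. inK F rate t (k t) \<Longrightarrow> thesis) \<Longrightarrow> thesis"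
  unfolding Aset_def by blast

lemma AsetI: "\<forall>t\<le>T. inK F rate t (k t) \<Longrightarrow> (\<chi> w. \<Sum>t\<le>T. k t w) \<in> Aset"
  unfolding Aset_def by blast

lemma vl_add: "vec_lambda f + vec_lambda g = vec_lambda (\<lambda>w. f w + g w)"
  by (rule vec_eq_iff[THEN iffD2]) simp

lemma cc_A: "convex_cone Aset"
  unfolding convex_cone_iff
proof (intro conjI ballI allI impI)
  show "0 \<in> Aset"
  proof -
    have "(\<chi> w. (0::real^'d)) \<in> Aset" using single_in_A[of 0 "\<lambda>w. 0"] inK_zero by simp
    moreover have "(\<chi> w. (0::real^'d)) = (0::real^'d^'w)" by (simp add: vec_eq_iff)
    ultimately show ?thesis by metis
  qed
next
  fix x y assume x: "x \<in> Aset" and y: "y \<in> Aset"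
  obtain k where k: "x = (\<chi> w. \<Sum>t\<le>T. k t w)" "\<forall>t\<le>T. inK F rate t (k t)"
    using AsetE[OF x] by blast
  obtain k' where k': "y = (\<chi> w. \<Sum>t\<le>T. k' t w)" "\<forall>t\<le>T. inK F rate t (k' t)"
    using AsetE[OF y] by blast
  have "x + y = (\<chi> w. \<Sum>t\<le>T. k t w + k' t w)"
  proof -
    have "(\<Sum>t\<le>T. k t w + k' t w) = (\<Sum>t\<le>T. k t w) + (\<Sum>t\<le>T. k' t w)" for w
      by (rule sum.distrib)
    then show ?thesis unfolding k(1) k'(1) vl_add by simp
  qed
  moreover have "\<forall>t\<le>T. inK F rate t (\<lambda>w. k t w + k' t w)"
  proof (intro allI impI)
    fix t assume "t \<le> T"
    then show "inK F rate t (\<lambda>w. k t w + k' t w)" using inK_add[of t "k t" "k' t"] k(2) k'(2) by simp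
  qed
  ultimately show "x + y \<in> Aset" using AsetI[of "\<lambda>t w. k t w + k' t w"] by simp
next
  fix x and c :: real assume x: "x \<in> Aset" and c: "0 \<le> c"
  obtain k where k: "x = (\<chi> w. \<Sum>t\<le>T. k t w)" "\<forall>t\<le>T. inK F rate t (k t)"
    using AsetE[OF x] by blast
  have "c *\<^sub>R x = (\<chi> w. \<Sum>t\<le>T. c *\<^sub>R k t w)"
  proof -
    have "(\<Sum>t\<le>T. c *\<^sub>R k t w) = c *\<^sub>R (\<Sum>t\<le>T. k t w)" for w
      by (rule scaleR_sum_right[symmetric])
    then show ?thesis unfolding k(1) by (simp add: vec_eq_iff)
  qed
  moreover have "\<forall>t\<le>T. inK F rate t (\<lambda>w. c *\<^sub>R k t w)" 
  proof (intro allI impI)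
    fix t assume "t \<le> T"
    then show "inK F rate t (\<lambda>w. c *\<^sub>R k t w)" using inK_scale[of t "k t" c] k(2) c by simp
  qed
  ultimately show "c *\<^sub>R x \<in> Aset" using AsetI[of "\<lambda>t w. c *\<^sub>R k t w"] by simp
qed

end



context mkt begin

definition wA :: "'w set \<Rightarrow> 'w" where "wA A = (SOME w. w \<in> A)"

lemma wA: "t \<le> T \<Longrightarrow> A \<in> F t \<Longrightarrow> wA A \<in> A"
proof -
  assume "t \<le> T" "A \<in> F t"
  then have "A \<noteq> {}" using part[of t] partition_onD3 by metis
  then show ?thesis unfolding wA_def by (simp add: some_in_eq)
qed

definition Gen :: "(real^'d^'w) set" where
  "Gen = (\<Union>t\<in>{..T}. \<Union>A\<in>F t. lift A ` gens t (wA A))"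

lemma finite_Gen: "finite Gen"
  unfolding Gen_def by (intro finite_UN_I finite_imageI finite_gens finite_atMost finite)

lemma vl_sum: "vec_lambda (\<lambda>w. \<Sum>t\<in>I. f t w) = (\<Sum>t\<in>I. vec_lambda (f t))"
  by (rule vec_eq_iff[THEN iffD2]) simp

lemma Gen_A: "Gen \<subseteq> Aset"
proof
  fix x assume "x \<in> Gen"
  then obtain t A g where t: "t \<le> T" and A: "A \<in> F t" and g: "g \<in> gens t (wA A)" and x: "x = lift A g"
    unfolding Gen_def by blast
  have "g \<in> coneK rate t (wA A)" unfolding coneK_gens using g by (rule hull_inc)
  then have "inK F rate t (\<lambda>w. if w \<in> A then g else 0)" using lift_inK[OF t A wA[OF t A]] by blast
  then have "(\<chi> w. if w \<in> A then g else 0) \<in> Aset" using single_in_A[OF t] by blast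
  then show "x \<in> Aset" unfolding x lift_def .
qed

lemma decomp:
  assumes t: "t \<le> T" and k: "inK F rate t k"
  shows "(\<chi> w. k w) = (\<Sum>A\<in>F t. lift A (k (wA A)))"
proof (rule vec_eq_iff[THEN iffD2], rule allI)
  fix w
  have "(\<Sum>A\<in>F t. lift A (k (wA A))) $ w = (\<Sum>A\<in>F t. if w \<in> A then k (wA A) else 0)"
    by (simp add: lift_def)
  also have "\<dots> = (\<Sum>A\<in>F t. if A = atom t w then k w else 0)"
  proof (rule sum.cong[OF refl])
    fix A assume A: "A \<in> F t"
    show "(if w \<in> A then k (wA A) else 0) = (if A = atom t w then k w else 0)"
    proof (cases "w \<in> A")
      case True
      then have "A = atom t w" using atom_eq[OF t A] by simp
      moreover have "k (wA A) = k w"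
        using measD[of t k A "wA A" w] k t A True wA[OF t A] unfolding inK_def by blast
      ultimately show ?thesis using True by simp
    next
      case False
      then have "A \<noteq> atom t w" using atom[OF t, of w] by auto
      then show ?thesis using False by simp
    qed
  qed
  also have "\<dots> = k w" using atom[OF t, of w] by (simp add: sum.delta')
  finally show "(\<chi> w. k w) $ w = (\<Sum>A\<in>F t. lift A (k (wA A))) $ w" by simp
qed

lemma A_hull: "Aset = convex_cone hull Gen"
proof
  show "convex_cone hull Gen \<subseteq> Aset" using hull_minimal[of Gen Aset convex_cone] Gen_A cc_A by blast
next
  show "Aset \<subseteq> convex_cone hull Gen"
  proof
    fix x assume "x \<in> Aset"
    then obtain k where x: "x = (\<chi> w. \<Sum>t\<le>T. k t w)" and k: "\<forall>t\<le>T. inK F rate t (k t)"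
      by (rule AsetE)
    have "x = (\<Sum>t\<le>T. (\<chi> w. k t w))" unfolding x by (rule vl_sum)
    also have "\<dots> \<in> convex_cone hull Gen"
    proof (rule cc_sum[OF convex_cone_convex_cone_hull finite_atMost])
      fix t assume "t \<in> {..T}"
      then have t: "t \<le> T" by simp
      have "(\<chi> w. k t w) = (\<Sum>A\<in>F t. lift A (k t (wA A)))" using decomp[OF t] k t by blast
      also have "\<dots> \<in> convex_cone hull Gen"
      proof (rule cc_sum[OF convex_cone_convex_cone_hull finite])
        fix A assume A: "A \<in> F t"
        have "k t (wA A) \<in> convex_cone hull gens t (wA A)"
          using k t unfolding inK_def coneK_gens by blast
        then have "lift A (k t (wA A)) \<in> lift A ` (convex_cone hull gens t (wA A))" by blast
        also have "\<dots> = convex_cone hull (lift A ` gens t (wA A))"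
          by (rule convex_cone_hull_linear_image[OF linear_lift, symmetric])
        also have "\<dots> \<subseteq> convex_cone hull Gen"
          by (rule hull_mono) (use t A in \<open>auto simp: Gen_def\<close>)
        finally show "lift A (k t (wA A)) \<in> convex_cone hull Gen" .
      qed
      finally show "(\<chi> w. k t w) \<in> convex_cone hull Gen" .
    qed
    finally show "x \<in> convex_cone hull Gen" .
  qed
qed

lemma closed_A: "closed Aset"
  unfolding A_hull by (rule closed_convex_cone_hull[OF finite_Gen])

lemma cone_sep:
  fixes S :: "'a::euclidean_space set"
  assumes "closed S" "convex_cone S" "p \<notin> S"
  shows "\<exists>L. (\<forall>a\<in>S. 0 \<le> L \<bullet> a) \<and> L \<bullet> p < 0"
proof -
  have cv: "convex S" using assms(2) unfolding convex_cone_def by blast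
  obtain a b where ab: "a \<bullet> p < b" "\<forall>x\<in>S. b < a \<bullet> x"
    using separating_hyperplane_closed_point[OF cv assms(1,3)] by blast
  have b: "b < 0" using ab(2) convex_cone_contains_0[OF assms(2)] by force
  have "0 \<le> a \<bullet> x" if x: "x \<in> S" for x
  proof (rule ccontr)
    assume n: "\<not> 0 \<le> a \<bullet> x"
    define c where "c = b / (a \<bullet> x)"
    have c: "0 \<le> c" using b n unfolding c_def by (simp add: divide_nonpos_neg)
    have "c *\<^sub>R x \<in> S" using convex_cone_scaleR[OF assms(2) c x] .
    then have "b < a \<bullet> (c *\<^sub>R x)" using ab(2) by blast
    moreover have "a \<bullet> (c *\<^sub>R x) = b" using n unfolding c_def by simp
    ultimately show False by simp
  qed
  then show ?thesis using ab b by force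
qed

definition Dst :: "(real^'d^'w) set" where "Dst = {L. \<forall>a\<in>Aset. 0 \<le> L \<bullet> a}"
definition ev :: "real^'d^'w" where "ev = (\<chi> w. axis j 1)"
definition Dset where "Dset = {L\<in>Dst. L \<bullet> ev = 1}"

lemma dual_atom:
  assumes L: "L \<in> Dst" and t: "t \<le> T" and A: "A \<in> F t" and w0: "w0 \<in> A"
  shows "(\<Sum>w\<in>A. L $ w) \<in> dual_cone (coneK rate t w0)"
  unfolding dual_cone_def
proof (rule CollectI, rule ballI)
  fix c assume c: "c \<in> coneK rate t w0"
  have "(\<chi> w. if w \<in> A then c else 0) \<in> Aset" using single_in_A[OF t lift_inK[OF t A w0 c]] .
  then have "0 \<le> L \<bullet> (\<chi> w. if w \<in> A then c else 0)" using L unfolding Dst_def by blast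
  also have "L \<bullet> (\<chi> w. if w \<in> A then c else 0) = (\<Sum>w\<in>UNIV. if w \<in> A then L $ w \<bullet> c else 0)"
    unfolding inner_vec_def by (intro sum.cong) auto
  also have "\<dots> = (\<Sum>w\<in>A. L $ w \<bullet> c)" by (simp add: sum.If_cases)
  also have "\<dots> = (\<Sum>w\<in>A. L $ w) \<bullet> c" by (simp add: inner_sum_left)
  finally show "0 \<le> (\<Sum>w\<in>A. L $ w) \<bullet> c" .
qed

lemma Dst_sing: "L \<in> Dst \<Longrightarrow> L $ w \<in> dual_cone (coneK rate T w)"
  using dual_atom[of L T "{w}" w] FT by auto

lemma Dst_nonneg: "L \<in> Dst \<Longrightarrow> 0 \<le> L $ w $ i"
  using Dst_sing dc_nonneg by blast

lemma inner_ev: "L \<bullet> ev = (\<Sum>w\<in>UNIV. L $ w $ j)"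
proof -
  have "L \<bullet> ev = (\<Sum>w\<in>UNIV. L $ w \<bullet> ev $ w)" by (rule inner_vec_def)
  then show ?thesis by (simp add: ev_def inner_axis)
qed

lemma cc_Dst: "convex_cone Dst"
  unfolding convex_cone_iff Dst_def
  by (auto simp: inner_add_left)

lemma Dst_ev_nonneg: "L \<in> Dst \<Longrightarrow> 0 \<le> L \<bullet> ev"
  unfolding inner_ev by (intro sum_nonneg Dst_nonneg)

lemma Dst_sep: "p \<notin> Aset \<Longrightarrow> \<exists>L\<in>Dst. L \<bullet> p < 0"
  using cone_sep[OF closed_A cc_A] unfolding Dst_def by blast

end



context mkt begin

lemma atom_inner:
  assumes s: "s \<le> T" and A: "A \<in> F s" and X: "meas F s X"
  shows "(\<Sum>w\<in>A. Q w * (V w \<bullet> X w)) = (\<Sum>w\<in>A. Q w *\<^sub>R V w) \<bullet> X (wA A)"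
proof -
  have "(\<Sum>w\<in>A. Q w * (V w \<bullet> X w)) = (\<Sum>w\<in>A. Q w * (V w \<bullet> X (wA A)))"
  proof (rule sum.cong[OF refl])
    fix w assume "w \<in> A"
    then have "X w = X (wA A)" using measD[OF X s A] wA[OF s A] by blast
    then show "Q w * (V w \<bullet> X w) = Q w * (V w \<bullet> X (wA A))" by simp
  qed
  also have "\<dots> = (\<Sum>w\<in>A. Q w *\<^sub>R V w) \<bullet> X (wA A)" by (simp add: inner_sum_left)
  finally show ?thesis .
qed

lemma tower:
  assumes M: "martingale T F Q S" and X: "meas F t X" and ts: "t \<le> s" and sT: "s \<le> T"
  shows "(\<Sum>w\<in>UNIV. Q w * (S s w \<bullet> X w)) = (\<Sum>w\<in>UNIV. Q w * (S t w \<bullet> X w))"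
  using ts
proof (induction s rule: dec_induct)
  case base then show ?case by simp
next
  case (step n)
  then have nT: "n < T" using sT by simp
  have Xn: "meas F n X" using meas_mono[OF X] step nT by simp
  have "(\<Sum>w\<in>UNIV. Q w * (S (Suc n) w \<bullet> X w)) = (\<Sum>A\<in>F n. \<Sum>w\<in>A. Q w * (S (Suc n) w \<bullet> X w))"
    using nT by (intro sum_part) simp
  also have "\<dots> = (\<Sum>A\<in>F n. (\<Sum>w\<in>A. Q w *\<^sub>R S (Suc n) w) \<bullet> X (wA A))"
    using nT Xn by (intro sum.cong[OF refl] atom_inner) auto
  also have "\<dots> = (\<Sum>A\<in>F n. (\<Sum>w\<in>A. Q w *\<^sub>R S n w) \<bullet> X (wA A))"
    using M nT unfolding martingale_def by (intro sum.cong[OF refl]) auto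
  also have "\<dots> = (\<Sum>A\<in>F n. \<Sum>w\<in>A. Q w * (S n w \<bullet> X w))"
    using nT Xn by (intro sum.cong[OF refl] atom_inner[symmetric]) auto
  also have "\<dots> = (\<Sum>w\<in>UNIV. Q w * (S n w \<bullet> X w))"
    using nT by (intro sum_part[symmetric]) simp
  finally show ?case using step.IH by simp
qed

definition Lam :: "('w \<Rightarrow> real) \<Rightarrow> (nat \<Rightarrow> 'w \<Rightarrow> real^'d) \<Rightarrow> real^'d^'w" where
  "Lam Q S = (\<chi> w. Q w *\<^sub>R S T w)"

definition Zv :: "(nat \<Rightarrow> 'w \<Rightarrow> real) \<Rightarrow> real^'d^'w" where
  "Zv chi = (\<chi> w. \<Sum>t\<le>T. chi t w *\<^sub>R xi t w)"

lemma inner_vl: "(L::real^'d^'w) \<bullet> vec_lambda f = (\<Sum>w\<in>UNIV. L $ w \<bullet> f w)"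
  by (simp add: inner_vec_def)

lemma Lam_inner:
  assumes M: "martingale T F Q S"
    and k: "\<forall>t\<le>T. meas F t (k t)"
  shows "Lam Q S \<bullet> (\<chi> w. \<Sum>t\<le>T. k t w) = (\<Sum>t\<le>T. \<Sum>w\<in>UNIV. Q w * (S t w \<bullet> k t w))"
proof -
  have "Lam Q S \<bullet> (\<chi> w. \<Sum>t\<le>T. k t w) = (\<Sum>w\<in>UNIV. (Q w *\<^sub>R S T w) \<bullet> (\<Sum>t\<le>T. k t w))"
    unfolding Lam_def inner_vl by simp
  also have "\<dots> = (\<Sum>w\<in>UNIV. \<Sum>t\<le>T. Q w * (S T w \<bullet> k t w))"
    by (simp add: inner_sum_right sum_distrib_left)
  also have "\<dots> = (\<Sum>t\<le>T. \<Sum>w\<in>UNIV. Q w * (S T w \<bullet> k t w))"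
    by (rule sum.swap)
  also have "\<dots> = (\<Sum>t\<le>T. \<Sum>w\<in>UNIV. Q w * (S t w \<bullet> k t w))"
  proof (rule sum.cong[OF refl])
    fix t assume "t \<in> {..T}"
    then show "(\<Sum>w\<in>UNIV. Q w * (S T w \<bullet> k t w)) = (\<Sum>w\<in>UNIV. Q w * (S t w \<bullet> k t w))"
      using tower[OF M, of t "k t" T] k by simp
  qed
  finally show ?thesis .
qed

lemma Pbar_Dset:
  assumes PB: "Pbar T F rate P j Q S"
  shows "Lam Q S \<in> Dset"
proof -
  have M: "martingale T F Q S" and pa: "prob_ac P Q"
    and SD: "\<forall>t\<le>T. \<forall>w. S t w \<in> dual_cone (coneK rate t w) - {0} \<and> S t w $ j = 1"
    using PB unfolding Pbar_def by auto
  have Qnn: "0 \<le> Q w" for w using pa unfolding prob_ac_def by auto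
  have "0 \<le> Lam Q S \<bullet> a" if a: "a \<in> Aset" for a
  proof -
    obtain k where ak: "a = (\<chi> w. \<Sum>t\<le>T. k t w)" and k: "\<forall>t\<le>T. inK F rate t (k t)"
      using AsetE[OF a] by blast
    have km: "\<forall>t\<le>T. meas F t (k t)" using k unfolding inK_def by blast
    have "0 \<le> (\<Sum>t\<le>T. \<Sum>w\<in>UNIV. Q w * (S t w \<bullet> k t w))"
    proof (intro sum_nonneg mult_nonneg_nonneg Qnn)
      fix t w assume "t \<in> {..T}"
      then have "S t w \<in> dual_cone (coneK rate t w)" "k t w \<in> coneK rate t w"
        using SD k unfolding inK_def by auto
      then show "0 \<le> S t w \<bullet> k t w" unfolding dual_cone_def by blast
    qed
    then show ?thesis unfolding ak Lam_inner[OF M km] .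
  qed
  moreover have "Lam Q S \<bullet> ev = 1"
  proof -
    have "Lam Q S \<bullet> ev = (\<Sum>w\<in>UNIV. Q w * S T w $ j)" unfolding inner_ev Lam_def by simp
    also have "\<dots> = (\<Sum>w\<in>UNIV. Q w)" using SD by simp
    also have "\<dots> = 1" using pa unfolding prob_ac_def by simp
    finally show ?thesis .
  qed
  ultimately show ?thesis unfolding Dset_def Dst_def by blast
qed

lemma expect_eq:
  assumes PB: "Pbar T F rate P j Q S" and chi: "mixed_stopping T F chi"
  shows "expect Q (stopped_payoff T xi S chi) = Lam Q S \<bullet> Zv chi"
proof -
  have M: "martingale T F Q S" using PB unfolding Pbar_def by auto
  have km: "\<forall>t\<le>T. meas F t (\<lambda>w. chi t w *\<^sub>R xi t w)"
  proof (intro allI impI)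
    fix t assume t: "t \<le> T"
    have "meas F t (chi t)" "meas F t (xi t)"
      using chi ao t unfolding mixed_stopping_def american_option_def by auto
    then show "meas F t (\<lambda>w. chi t w *\<^sub>R xi t w)" using meas2[of t "chi t" "xi t" "(*\<^sub>R)"] by simp
  qed
  have "expect Q (stopped_payoff T xi S chi) = (\<Sum>w\<in>UNIV. \<Sum>t\<le>T. Q w * (S t w \<bullet> (chi t w *\<^sub>R xi t w)))"
    unfolding expect_def stopped_payoff_def by (simp add: sum_distrib_left inner_commute mult.assoc)
  also have "\<dots> = (\<Sum>t\<le>T. \<Sum>w\<in>UNIV. Q w * (S t w \<bullet> (chi t w *\<^sub>R xi t w)))"
    by (rule sum.swap)
  also have "\<dots> = Lam Q S \<bullet> Zv chi"
    unfolding Zv_def Lam_inner[OF M km] ..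
  finally show ?thesis .
qed

end



context mkt begin

lemma meas_sum: assumes "finite I" "\<And>s. s \<in> I \<Longrightarrow> meas F t (f s)"
  shows "meas F t (\<lambda>w. \<Sum>s\<in>I. f s w)"
  unfolding meas_def
proof (intro ballI)
  fix A w w' assume "A \<in> F t" "w \<in> A" "w' \<in> A"
  then have "f s w = f s w'" if "s \<in> I" for s using assms(2)[OF that] unfolding meas_def by blast
  then show "(\<Sum>s\<in>I. f s w) = (\<Sum>s\<in>I. f s w')" by (intro sum.cong) auto
qed

lemma not_in_A:
  "- (\<chi> w. if w = w0 then axis j (1::real) else 0) \<notin> Aset"
proof
  define x where "x = (\<lambda>w. if w = w0 then axis j (1::real) else (0::real^'d))"
  assume "- (\<chi> w. if w = w0 then axis j (1::real) else 0) \<in> Aset"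
  then obtain k where pk: "- (\<chi> w. x w) = (\<chi> w. \<Sum>t\<le>T. k t w)" and k: "\<forall>t\<le>T. inK F rate t (k t)"
    unfolding x_def by (rule AsetE) blast
  have sk: "(\<Sum>t\<le>T. k t w) = - x w" for w
  proof -
    have "(- (\<chi> w. x w)) $ w = (\<chi> w. \<Sum>t\<le>T. k t w) $ w" using pk by simp
    then show ?thesis by simp
  qed
  define y where "y = (\<lambda>t w. if t \<le> T then - (\<Sum>s<t. k s w) else 0)"
  have ts: "trading_strategy T F y"
    unfolding trading_strategy_def
  proof (intro conjI allI impI)
    fix w w' show "y 0 w = y 0 w'" by (simp add: y_def)
  next
    fix t assume t: "1 \<le> t \<and> t \<le> T"
    have "meas F (t - 1) (\<lambda>w. \<Sum>s<t. k s w)"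
    proof (rule meas_sum)
      fix s assume "s \<in> {..<t}"
      then have "s \<le> t - 1" "t - 1 \<le> T" using t by auto
      moreover have "meas F s (k s)" using k \<open>s \<le> t - 1\<close> \<open>t - 1 \<le> T\<close> unfolding inK_def by simp
      ultimately show "meas F (t - 1) (k s)" using meas_mono by blast
    qed simp
    then have "meas F (t - 1) (\<lambda>w. - (\<Sum>s<t. k s w))" using meas1 by blast
    then show "meas F (t - 1) (y t)" using t unfolding y_def by simp
  next
    fix w show "y (Suc T) w = 0" by (simp add: y_def)
  qed
  have y0: "\<forall>w. y 0 w = 0" by (simp add: y_def)
  have steps: "\<forall>t<T. inK F rate t (\<lambda>w. y t w - y (Suc t) w)"
  proof (intro allI impI)
    fix t assume t: "t < T"
    have "(\<lambda>w. y t w - y (Suc t) w) = k t" using t by (auto simp: y_def)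
    then show "inK F rate t (\<lambda>w. y t w - y (Suc t) w)" using k t by simp
  qed
  have last: "inK F rate T (\<lambda>w. y T w - x w)"
  proof -
    have "y T w - x w = k T w" for w
    proof -
      have "(\<Sum>t\<le>T. k t w) = (\<Sum>t<T. k t w) + k T w"
        by (simp add: lessThan_Suc_atMost[symmetric])
      moreover have "x w = - (\<Sum>t\<le>T. k t w)" using sk[of w] by simp
      then have "y T w - x w = - (\<Sum>t<T. k t w) + (\<Sum>t\<le>T. k t w)" by (simp add: y_def)
      ultimately show ?thesis by simp
    qed
    then have "(\<lambda>w. y T w - x w) = k T" by auto
    then show ?thesis using k by simp
  qed
  have xnn: "\<forall>w i. 0 \<le> x w $ i" by (simp add: x_def axis_def)
  have xnz: "x \<noteq> (\<lambda>w. 0)"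
  proof
    assume "x = (\<lambda>w. 0)"
    then have "x w0 = 0" by simp
    then show False by (simp add: x_def)
  qed
  show False using na ts y0 steps meas_T[of x] xnn xnz last unfolding no_arbitrage_def by blast
qed

lemma exists_pos: "\<exists>L\<in>Dst. \<forall>w. 0 < L $ w $ j"
proof -
  have "\<exists>L\<in>Dst. 0 < L $ w0 $ j" for w0
  proof -
    obtain L where L: "L \<in> Dst" "L \<bullet> (- (\<chi> w. if w = w0 then axis j (1::real) else 0)) < 0"
      using Dst_sep[OF not_in_A[of w0]] by blast
    have "L \<bullet> (- (\<chi> w. if w = w0 then axis j (1::real) else 0))
        = - (\<Sum>w\<in>UNIV. L $ w \<bullet> (if w = w0 then axis j (1::real) else 0))"
      unfolding inner_minus_right inner_vl by simp
    also have "(\<lambda>w. L $ w \<bullet> (if w = w0 then axis j (1::real) else 0)) = (\<lambda>w. if w = w0 then L $ w0 $ j else 0)"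
      by (auto simp: inner_axis)
    also have "- (\<Sum>w\<in>UNIV. if w = w0 then L $ w0 $ j else 0) = - (L $ w0 $ j)" by simp
    finally show ?thesis using L by auto
  qed
  then obtain Lf where Lf: "\<And>w0. Lf w0 \<in> Dst" "\<And>w0. 0 < Lf w0 $ w0 $ j" by metis
  define Ls where "Ls = (\<Sum>w0\<in>UNIV. Lf w0)"
  have "Ls \<in> Dst" unfolding Ls_def by (rule cc_sum[OF cc_Dst finite]) (use Lf in auto)
  moreover have "0 < Ls $ w $ j" for w
  proof -
    have "Lf w $ w $ j \<le> (\<Sum>w0\<in>UNIV. Lf w0 $ w $ j)"
      by (rule member_le_sum) (auto intro: Dst_nonneg Lf)
    then show ?thesis using Lf(2)[of w] unfolding Ls_def by simp
  qed
  ultimately show ?thesis by blast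
qed

definition sig :: "real^'d^'w \<Rightarrow> nat \<Rightarrow> 'w \<Rightarrow> real^'d" where
  "sig L t w = (\<Sum>w'\<in>atom t w. L $ w')"

lemma sig_dual: "L \<in> Dst \<Longrightarrow> t \<le> T \<Longrightarrow> sig L t w \<in> dual_cone (coneK rate t w)"
  unfolding sig_def using dual_atom atom by blast

lemma sig_eq: "t \<le> T \<Longrightarrow> A \<in> F t \<Longrightarrow> w \<in> A \<Longrightarrow> sig L t w = (\<Sum>w'\<in>A. L $ w')"
  unfolding sig_def using atom_eq by simp

lemma Dset_Pbar:
  assumes L: "L \<in> Dset"
  shows "\<exists>Q S. Pbar T F rate P j Q S \<and> Lam Q S = L"
proof -
  obtain Ls where Ls: "Ls \<in> Dst" "\<And>w. 0 < Ls $ w $ j" using exists_pos by blast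
  have LD: "L \<in> Dst" and Lev: "L \<bullet> ev = 1" using L unfolding Dset_def by auto
  define Q where "Q w = L $ w $ j" for w
  define S where "S t w = (if 0 < sig L t w $ j then (1 / sig L t w $ j) *\<^sub>R sig L t w
                            else (1 / sig Ls t w $ j) *\<^sub>R sig Ls t w)" for t w
  have Qnn: "0 \<le> Q w" for w unfolding Q_def by (rule Dst_nonneg[OF LD])
  have sLs: "0 < sig Ls t w $ j" if t: "t \<le> T" for t w
  proof -
    have "Ls $ w $ j \<le> (\<Sum>w'\<in>atom t w. Ls $ w' $ j)"
      by (rule member_le_sum) (use atom[OF t] Dst_nonneg[OF Ls(1)] in auto)
    then show ?thesis using Ls(2)[of w] unfolding sig_def by simp
  qed
  have AT: "(\<Sum>w\<in>A. Q w *\<^sub>R S t w) = (\<Sum>w\<in>A. L $ w)" if t: "t \<le> T" and A: "A \<in> F t" for t A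
  proof -
    define \<sigma> where "\<sigma> = (\<Sum>w\<in>A. L $ w)"
    obtain w0 where w0: "w0 \<in> A" using wA[OF t A] by blast
    have sd: "\<sigma> \<in> dual_cone (coneK rate t w0)" unfolding \<sigma>_def by (rule dual_atom[OF LD t A w0])
    have sq: "(\<Sum>w\<in>A. Q w) = \<sigma> $ j" unfolding \<sigma>_def Q_def by simp
    show ?thesis
    proof (cases "0 < \<sigma> $ j")
      case True
      have "(\<Sum>w\<in>A. Q w *\<^sub>R S t w) = (\<Sum>w\<in>A. Q w *\<^sub>R ((1 / \<sigma> $ j) *\<^sub>R \<sigma>))"
        by (rule sum.cong[OF refl]) (use True sig_eq[OF t A] in \<open>simp add: S_def \<sigma>_def\<close>)
      also have "\<dots> = (\<Sum>w\<in>A. Q w) *\<^sub>R ((1 / \<sigma> $ j) *\<^sub>R \<sigma>)" by (rule scaleR_sum_left[symmetric])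
      also have "\<dots> = \<sigma>" using True sq by simp
      finally show ?thesis unfolding \<sigma>_def .
    next
      case False
      then have "\<sigma> $ j = 0" using dc_nonneg[OF sd, of j] by simp
      then have s0: "\<sigma> = 0" using dc_zero[OF sd] by simp
      have "\<forall>w\<in>A. Q w = 0" using sum_nonneg_eq_0_iff[of A Q] sq \<open>\<sigma> $ j = 0\<close> Qnn by simp
      then have "(\<Sum>w\<in>A. Q w *\<^sub>R S t w) = 0" by simp
      then show ?thesis using s0 unfolding \<sigma>_def by simp
    qed
  qed
  have pa: "prob_ac P Q"
    unfolding prob_ac_def using Qnn Ppos Lev unfolding inner_ev Q_def by (metis less_irrefl)
  have Smeas: "meas F t (S t)" if "t \<le> T" for t
    unfolding meas_def
  proof (intro ballI)
    fix A w w' assume "A \<in> F t" "w \<in> A" "w' \<in> A"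
    then have "atom t w = atom t w'" using atom_eq[OF that] by simp
    then show "S t w = S t w'" unfolding S_def sig_def by simp
  qed
  have mart: "martingale T F Q S"
    unfolding martingale_def
  proof (intro conjI allI impI ballI)
    fix t assume "t \<le> T" then show "meas F t (S t)" by (rule Smeas)
  next
    fix t A assume t: "t < T" and A: "A \<in> F t"
    have "(\<Sum>w\<in>A. Q w *\<^sub>R S (Suc t) w) = (\<Sum>B\<in>{B\<in>F (Suc t). B \<subseteq> A}. \<Sum>w\<in>B. Q w *\<^sub>R S (Suc t) w)"
      by (rule sum_refine[OF t A])
    also have "\<dots> = (\<Sum>B\<in>{B\<in>F (Suc t). B \<subseteq> A}. \<Sum>w\<in>B. L $ w)"
      by (rule sum.cong[OF refl]) (use t AT in auto)
    also have "\<dots> = (\<Sum>w\<in>A. L $ w)" by (rule sum_refine[OF t A, symmetric])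
    also have "\<dots> = (\<Sum>w\<in>A. Q w *\<^sub>R S t w)" using AT[of t A] t A by simp
    finally show "(\<Sum>w\<in>A. Q w *\<^sub>R S (Suc t) w) = (\<Sum>w\<in>A. Q w *\<^sub>R S t w)" .
  qed
  have Sd: "S t w \<in> dual_cone (coneK rate t w) - {0} \<and> S t w $ j = 1" if t: "t \<le> T" for t w
  proof (cases "0 < sig L t w $ j")
    case True
    have "S t w = (1 / sig L t w $ j) *\<^sub>R sig L t w" using True by (simp add: S_def)
    moreover have "(1 / sig L t w $ j) *\<^sub>R sig L t w \<in> dual_cone (coneK rate t w)"
      using dc_scale[OF sig_dual[OF LD t]] True by simp
    moreover have "((1 / sig L t w $ j) *\<^sub>R sig L t w) $ j = 1" using True by simp
    ultimately show ?thesis by auto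
  next
    case False
    have "S t w = (1 / sig Ls t w $ j) *\<^sub>R sig Ls t w" using False by (simp add: S_def)
    moreover have "(1 / sig Ls t w $ j) *\<^sub>R sig Ls t w \<in> dual_cone (coneK rate t w)"
      using dc_scale[OF sig_dual[OF Ls(1) t, of w], of "1 / sig Ls t w $ j"] sLs[OF t, of w] by simp
    moreover have "((1 / sig Ls t w $ j) *\<^sub>R sig Ls t w) $ j = 1" using sLs[OF t, of w] by simp
    ultimately show ?thesis by auto
  qed
  have "Pbar T F rate P j Q S" unfolding Pbar_def using pa mart Sd by blast
  moreover have "Lam Q S = L"
  proof (rule vec_eq_iff[THEN iffD2], rule allI)
    fix w
    have "{w} \<in> F T" using FT by auto
    then show "Lam Q S $ w = L $ w" using AT[of T "{w}"] unfolding Lam_def by simp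
  qed
  ultimately show ?thesis by blast
qed

end



lemma seq_sub:
  fixes f :: "nat \<Rightarrow> 'i \<Rightarrow> real"
  assumes "finite I" "\<And>n i. i \<in> I \<Longrightarrow> f n i \<in> {0..1}"
  shows "\<exists>r l. strict_mono r \<and> (\<forall>i\<in>I. (\<lambda>n. f (r n) i) \<longlonglongrightarrow> l i)"
  using assms
proof (induction I rule: finite_induct)
  case empty
  have "strict_mono (id :: nat \<Rightarrow> nat)" by (simp add: strict_mono_def)
  then show ?case by blast
next
  case (insert i I)
  obtain r l where r: "strict_mono r" and l: "\<forall>i'\<in>I. (\<lambda>n. f (r n) i') \<longlonglongrightarrow> l i'"
    using insert.IH insert.prems by blast
  have sc: "seq_compact {0..1::real}" by (rule compact_imp_seq_compact) simp
  have mem: "\<forall>n. f (r n) i \<in> {0..1}" using insert.prems by simp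
  obtain l0 r2 where r2: "strict_mono r2" and l0: "((\<lambda>n. f (r n) i) \<circ> r2) \<longlonglongrightarrow> l0"
    using spec[OF sc[unfolded seq_compact_def], of "\<lambda>n. f (r n) i"] mem by auto
  have "strict_mono (r \<circ> r2)" using r r2 by (rule strict_mono_o)
  moreover have "\<forall>i'\<in>insert i I. (\<lambda>n. f ((r \<circ> r2) n) i') \<longlonglongrightarrow> (l(i := l0)) i'"
  proof
    fix i' assume i': "i' \<in> insert i I"
    show "(\<lambda>n. f ((r \<circ> r2) n) i') \<longlonglongrightarrow> (l(i := l0)) i'"
    proof (cases "i' = i")
      case True then show ?thesis using l0 by (simp add: comp_def)
    next
      case False
      then have "i' \<in> I" using i' by simp
      then have "((\<lambda>n. f (r n) i') \<circ> r2) \<longlonglongrightarrow> l i'" using l r2 LIMSEQ_subseq_LIMSEQ by blast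
      then show ?thesis using False by (simp add: comp_def)
    qed
  qed
  ultimately show ?case by blast
qed

context mkt begin

lemma hedge_A:
  assumes H: "Phi_bg T F rate xi y chi" and y0: "\<forall>w. y 0 w = x *\<^sub>R axis j 1"
  shows "x *\<^sub>R ev + Zv chi \<in> Aset"
proof -
  define k where "k t w = y t w + chi t w *\<^sub>R xi t w - y (Suc t) w" for t w
  have k: "\<forall>t\<le>T. inK F rate t (k t)" using H unfolding Phi_bg_def k_def by simp
  have yT: "y (Suc T) w = 0" for w using H unfolding Phi_bg_def trading_strategy_def by simp
  have "(\<Sum>t\<le>T. k t w) = x *\<^sub>R axis j 1 + (\<Sum>t\<le>T. chi t w *\<^sub>R xi t w)" for w
  proof -
    have "(\<Sum>t\<le>T. k t w) = (\<Sum>t<Suc T. y t w - y (Suc t) w) + (\<Sum>t<Suc T. chi t w *\<^sub>R xi t w)"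
      unfolding k_def lessThan_Suc_atMost by (simp add: sum.distrib[symmetric] algebra_simps)
    also have "\<dots> = y 0 w - y (Suc T) w + (\<Sum>t\<le>T. chi t w *\<^sub>R xi t w)"
    proof -
      have "(\<Sum>t<Suc T. y t w - y (Suc t) w) = y 0 w - y (Suc T) w"
        by (rule sum_lessThan_telescope'[of "\<lambda>t. y t w"])
      then show ?thesis by (simp add: lessThan_Suc_atMost)
    qed
    finally show ?thesis using yT y0 by simp
  qed
  then have "x *\<^sub>R ev + Zv chi = (\<chi> w. \<Sum>t\<le>T. k t w)"
    unfolding ev_def Zv_def by (simp add: vec_eq_iff)
  then show ?thesis using AsetI[OF k] by simp
qed

lemma A_hedge:
  assumes chi: "mixed_stopping T F chi" and a: "x *\<^sub>R ev + Zv chi \<in> Aset"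
  shows "- x \<in> pi_bg_set T F rate xi j"
proof -
  obtain k where ak: "x *\<^sub>R ev + Zv chi = (\<chi> w. \<Sum>t\<le>T. k t w)" and k: "\<forall>t\<le>T. inK F rate t (k t)"
    using AsetE[OF a] by blast
  have sk: "(\<Sum>t\<le>T. k t w) = x *\<^sub>R axis j 1 + (\<Sum>t\<le>T. chi t w *\<^sub>R xi t w)" for w
  proof -
    have "(x *\<^sub>R ev + Zv chi) $ w = (\<chi> w. \<Sum>t\<le>T. k t w) $ w" using ak by simp
    then show ?thesis unfolding ev_def Zv_def by simp
  qed
  define g where "g s w = chi s w *\<^sub>R xi s w - k s w" for s w
  define y where "y t w = (if t \<le> T then x *\<^sub>R axis j 1 + (\<Sum>s<t. g s w) else 0)" for t w
  have gm: "meas F s (g s)" if "s \<le> T" for s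
  proof -
    have "meas F s (chi s)" "meas F s (xi s)" "meas F s (k s)"
      using chi ao k that unfolding mixed_stopping_def american_option_def inK_def by auto
    then have "meas F s (\<lambda>w. chi s w *\<^sub>R xi s w)" using meas2[of s "chi s" "xi s" "(*\<^sub>R)"] by simp
    then show ?thesis using meas2[of s _ "k s" "(-)"] \<open>meas F s (k s)\<close> unfolding g_def by simp
  qed
  have ts: "trading_strategy T F y"
    unfolding trading_strategy_def
  proof (intro conjI allI impI)
    fix w w' show "y 0 w = y 0 w'" by (simp add: y_def)
  next
    fix t assume t: "1 \<le> t \<and> t \<le> T"
    have "meas F (t - 1) (\<lambda>w. \<Sum>s<t. g s w)"
    proof (rule meas_sum)
      fix s assume "s \<in> {..<t}"
      then have "s \<le> t - 1" "t - 1 \<le> T" using t by auto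
      then show "meas F (t - 1) (g s)" using meas_mono gm by (meson order_trans)
    qed simp
    then have "meas F (t - 1) (\<lambda>w. x *\<^sub>R axis j 1 + (\<Sum>s<t. g s w))"
      using meas1[of "t - 1" "\<lambda>w. \<Sum>s<t. g s w" "\<lambda>v. x *\<^sub>R axis j 1 + v"] by simp
    then show "meas F (t - 1) (y t)" using t unfolding y_def by simp
  next
    fix w show "y (Suc T) w = 0" by (simp add: y_def)
  qed
  have incr: "inK F rate t (\<lambda>w. y t w + chi t w *\<^sub>R xi t w - y (Suc t) w)" if t: "t \<le> T" for t
  proof -
    have "y t w + chi t w *\<^sub>R xi t w - y (Suc t) w = k t w" for w
    proof (cases "t < T")
      case True
      then show ?thesis by (simp add: y_def g_def)
    next
      case False
      then have tT: "t = T" using t by simp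
      let ?Cs = "(\<Sum>s<T. chi s w *\<^sub>R xi s w)" and ?Ks = "(\<Sum>s<T. k s w)"
      have h1: "(\<Sum>s\<le>T. k s w) = ?Ks + k T w"
        by (simp add: lessThan_Suc_atMost[symmetric])
      have h2: "(\<Sum>s\<le>T. chi s w *\<^sub>R xi s w) = ?Cs + chi T w *\<^sub>R xi T w"
        by (simp add: lessThan_Suc_atMost[symmetric])
      have e1: "(\<Sum>s<T. g s w) = ?Cs - ?Ks"
        unfolding g_def by (rule sum_subtractf)
      have e2: "x *\<^sub>R axis j 1 + ?Cs + chi T w *\<^sub>R xi T w = ?Ks + k T w"
        using sk[of w] h1 h2 by (simp add: add.assoc)
      have "y t w + chi t w *\<^sub>R xi t w - y (Suc t) w = x *\<^sub>R axis j 1 + (?Cs - ?Ks) + chi T w *\<^sub>R xi T w"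
        using tT by (simp add: y_def e1)
      also have "\<dots> = (x *\<^sub>R axis j 1 + ?Cs + chi T w *\<^sub>R xi T w) - ?Ks" by (simp add: algebra_simps)
      also have "\<dots> = k T w" unfolding e2 by simp
      finally show ?thesis using tT by simp
    qed
    then have "(\<lambda>w. y t w + chi t w *\<^sub>R xi t w - y (Suc t) w) = k t" by auto
    then show ?thesis using k t by simp
  qed
  have "Phi_bg T F rate xi y chi" unfolding Phi_bg_def using ts chi incr by blast
  moreover have "\<forall>w. y 0 w = x *\<^sub>R axis j 1" by (simp add: y_def)
  ultimately show ?thesis unfolding pi_bg_set_def by blast
qed

lemma weak:
  assumes s: "s \<in> pi_bg_set T F rate xi j"
  shows "\<exists>chi. mixed_stopping T F chi \<and> (\<forall>L\<in>Dset. s \<le> L \<bullet> Zv chi)"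
proof -
  obtain x y chi where sx: "s = - x" and H: "Phi_bg T F rate xi y chi" and y0: "\<forall>w. y 0 w = x *\<^sub>R axis j 1"
    using s unfolding pi_bg_set_def by blast
  have a: "x *\<^sub>R ev + Zv chi \<in> Aset" by (rule hedge_A[OF H y0])
  have "s \<le> L \<bullet> Zv chi" if L: "L \<in> Dset" for L
  proof -
    have "0 \<le> L \<bullet> (x *\<^sub>R ev + Zv chi)" using a L unfolding Dset_def Dst_def by blast
    also have "L \<bullet> (x *\<^sub>R ev + Zv chi) = x + L \<bullet> Zv chi"
      using L unfolding Dset_def by (simp add: inner_add_right)
    finally show ?thesis using sx by simp
  qed
  moreover have "mixed_stopping T F chi" using H unfolding Phi_bg_def by blast
  ultimately show ?thesis by blast
qed

lemma Dset_ne: "Dset \<noteq> {}"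
proof -
  obtain Ls where Ls: "Ls \<in> Dst" "\<And>w. 0 < Ls $ w $ j" using exists_pos by blast
  have pos: "0 < Ls \<bullet> ev" unfolding inner_ev
    by (rule sum_pos) (use Ls(2) in auto)
  have "(1 / (Ls \<bullet> ev)) *\<^sub>R Ls \<in> Dset"
    unfolding Dset_def using convex_cone_scaleR[OF cc_Dst _ Ls(1), of "1 / (Ls \<bullet> ev)"] pos by simp
  then show ?thesis by blast
qed

lemma rate_pos: "t \<le> T \<Longrightarrow> 0 < rate t w a b"
  using er unfolding exchange_rates_def by blast

lemma compact_Dset: "compact Dset"
  unfolding compact_eq_bounded_closed
proof
  show "bounded Dset"
    unfolding bounded_iff
  proof (intro exI ballI)
    fix L assume L: "L \<in> Dset"
    have LD: "L \<in> Dst" using L unfolding Dset_def by blast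
    have cb: "\<bar>L $ w $ i\<bar> \<le> rate T w j i" for w i
    proof -
      have d: "L $ w \<in> dual_cone (coneK rate T w)" by (rule Dst_sing[OF LD])
      have "0 \<le> L $ w \<bullet> (rate T w j i *\<^sub>R axis j 1 - axis i 1)"
        using d rate_coneK unfolding dual_cone_def by blast
      then have le: "L $ w $ i \<le> rate T w j i * L $ w $ j" by (simp add: inner_diff_right inner_axis)
      have "L $ w $ j \<le> (\<Sum>w'\<in>UNIV. L $ w' $ j)"
        by (rule member_le_sum) (auto intro: Dst_nonneg[OF LD])
      then have "L $ w $ j \<le> 1" using L unfolding Dset_def inner_ev by simp
      then have "rate T w j i * L $ w $ j \<le> rate T w j i"
        using rate_pos[of T w j i] by (simp add: mult_left_le)
      then show ?thesis using le Dst_nonneg[OF LD, of w i] by simp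
    qed
    have "norm L \<le> (\<Sum>w\<in>UNIV. norm (L $ w))" unfolding norm_vec_def by (rule L2_set_le_sum) simp
    also have "\<dots> \<le> (\<Sum>w\<in>UNIV. \<Sum>i\<in>UNIV. \<bar>L $ w $ i\<bar>)"
      by (rule sum_mono) (rule norm_le_l1_cart)
    also have "\<dots> \<le> (\<Sum>w\<in>UNIV. \<Sum>i\<in>UNIV. rate T w j i)"
      by (intro sum_mono cb)
    finally show "norm L \<le> (\<Sum>w\<in>UNIV. \<Sum>i\<in>UNIV. rate T w j i)" .
  qed
next
  have "Dset = (\<Inter>a\<in>Aset. {L. 0 \<le> a \<bullet> L}) \<inter> {L. ev \<bullet> L = 1}"
    unfolding Dset_def Dst_def by (auto simp: inner_commute)
  moreover have "closed (\<Inter>a\<in>Aset. {L. 0 \<le> a \<bullet> L})"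
    by (intro closed_INT ballI closed_halfspace_ge)
  moreover have "closed {L. ev \<bullet> L = 1}" by (rule closed_hyperplane)
  ultimately show "closed Dset" by (simp add: closed_Int)
qed

lemma duality:
  assumes chi: "mixed_stopping T F chi"
  shows "\<exists>Lm\<in>Dset. (\<forall>L\<in>Dset. Lm \<bullet> Zv chi \<le> L \<bullet> Zv chi) \<and> Lm \<bullet> Zv chi \<in> pi_bg_set T F rate xi j"
proof -
  have "continuous_on Dset (\<lambda>L. L \<bullet> Zv chi)" by (intro continuous_intros)
  then obtain Lm where Lm: "Lm \<in> Dset" and min: "\<forall>L\<in>Dset. Lm \<bullet> Zv chi \<le> L \<bullet> Zv chi"
    using continuous_attains_inf[OF compact_Dset Dset_ne] by blast
  define m where "m = Lm \<bullet> Zv chi"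
  have "(- m) *\<^sub>R ev + Zv chi \<in> Aset"
  proof (rule ccontr)
    assume "(- m) *\<^sub>R ev + Zv chi \<notin> Aset"
    then obtain L where L: "L \<in> Dst" and neg: "L \<bullet> ((- m) *\<^sub>R ev + Zv chi) < 0"
      using Dst_sep by blast
    have neg': "L \<bullet> Zv chi < m * (L \<bullet> ev)" using neg by (simp add: inner_add_right inner_diff_right)
    have e0: "0 \<le> L \<bullet> ev" by (rule Dst_ev_nonneg[OF L])
    have LmD: "Lm \<in> Dst" and Lme: "Lm \<bullet> ev = 1" using Lm unfolding Dset_def by auto
    define L' where "L' = (1 / (1 + L \<bullet> ev)) *\<^sub>R (Lm + L)"
    have "Lm + L \<in> Dst" using convex_cone_add[OF cc_Dst LmD L] .
    then have "L' \<in> Dst" unfolding L'_def using convex_cone_scaleR[OF cc_Dst] e0 by simp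
    moreover have "L' \<bullet> ev = 1" unfolding L'_def using Lme e0 by (simp add: inner_add_left)
    ultimately have L'D: "L' \<in> Dset" unfolding Dset_def by blast
    have "L' \<bullet> Zv chi = (m + L \<bullet> Zv chi) / (1 + L \<bullet> ev)"
      unfolding L'_def m_def by (simp add: inner_add_left)
    also have "\<dots> < m"
    proof -
      have "m + L \<bullet> Zv chi < m * (1 + L \<bullet> ev)" using neg' by (simp add: algebra_simps)
      then show ?thesis using e0 by (simp add: divide_less_eq)
    qed
    finally show False using min L'D unfolding m_def by force
  qed
  then have "- (- m) \<in> pi_bg_set T F rate xi j" by (rule A_hedge[OF chi])
  then show ?thesis using Lm min unfolding m_def by auto
qed

end



lemma le_abs_frac: "0 \<le> (c::real) \<Longrightarrow> c \<le> 1 \<Longrightarrow> c * a \<le> \<bar>a\<bar>"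
  by (cases "0 \<le> a") (auto simp: mult_left_le_one_le mult_nonneg_nonpos intro: order_trans[of _ 0])

context mkt begin

lemma inner_Zv: "L \<bullet> Zv chi = (\<Sum>w\<in>UNIV. \<Sum>t\<le>T. chi t w * (L $ w \<bullet> xi t w))"
  unfolding Zv_def inner_vl by (simp add: inner_sum_right)

lemma main:
  "pi_bg_set T F rate xi j \<noteq> {} \<and> bdd_above (pi_bg_set T F rate xi j)
    \<and> (\<forall>chi. mixed_stopping T F chi \<longrightarrow>
          (\<exists>Q S. Pbar T F rate P j Q S
             \<and> (\<forall>Q' S'. Pbar T F rate P j Q' S' \<longrightarrow>
                   expect Q (stopped_payoff T xi S chi) \<le> expect Q' (stopped_payoff T xi S' chi))
             \<and> expect Q (stopped_payoff T xi S chi) \<le> pi_bg T F rate xi j))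
    \<and> (\<exists>chi0 Q0 S0. mixed_stopping T F chi0 \<and> Pbar T F rate P j Q0 S0
          \<and> pi_bg T F rate xi j = expect Q0 (stopped_payoff T xi S0 chi0)
          \<and> (\<forall>Q S. Pbar T F rate P j Q S \<longrightarrow>
                expect Q0 (stopped_payoff T xi S0 chi0) \<le> expect Q (stopped_payoff T xi S chi0)))"
  (is "?ne \<and> ?bdd \<and> ?third \<and> ?fourth")
proof -
  let ?S = "pi_bg_set T F rate xi j"
  obtain L0 where L0: "L0 \<in> Dset" using Dset_ne by blast
  define chi1 where "chi1 t w = (if t = (0::nat) then 1 else (0::real))" for t and w :: 'w
  have "mixed_stopping T F chi1"
    unfolding mixed_stopping_def chi1_def by (auto simp: meas_const)
  then have ne: ?ne using duality by blast
  define B where "B = (\<Sum>w\<in>UNIV. \<Sum>t\<le>T. \<bar>L0 $ w \<bullet> xi t w\<bar>)"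
  have bdd: ?bdd
    unfolding bdd_above_def
  proof (intro exI ballI)
    fix s assume "s \<in> ?S"
    then obtain chi where chi: "mixed_stopping T F chi" and le: "\<forall>L\<in>Dset. s \<le> L \<bullet> Zv chi"
      using weak by blast
    have "s \<le> L0 \<bullet> Zv chi" using le L0 by blast
    also have "\<dots> \<le> B" unfolding inner_Zv B_def
    proof (intro sum_mono)
      fix w t assume "t \<in> {..T}"
      then have "0 \<le> chi t w" "chi t w \<le> 1" using chi unfolding mixed_stopping_def by auto
      then show "chi t w * (L0 $ w \<bullet> xi t w) \<le> \<bar>L0 $ w \<bullet> xi t w\<bar>" by (rule le_abs_frac)
    qed
    finally show "s \<le> B" .
  qed
  have pibg: "pi_bg T F rate xi j = Sup ?S" unfolding pi_bg_def ..
  have third: ?third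
  proof (intro allI impI)
    fix chi assume chi: "mixed_stopping T F chi"
    obtain Lm where Lm: "Lm \<in> Dset" and min: "\<forall>L\<in>Dset. Lm \<bullet> Zv chi \<le> L \<bullet> Zv chi"
      and mem: "Lm \<bullet> Zv chi \<in> ?S" using duality[OF chi] by blast
    obtain Q S where PB: "Pbar T F rate P j Q S" and LQ: "Lam Q S = Lm" using Dset_Pbar[OF Lm] by blast
    have E: "expect Q (stopped_payoff T xi S chi) = Lm \<bullet> Zv chi" using expect_eq[OF PB chi] LQ by simp
    have "\<forall>Q' S'. Pbar T F rate P j Q' S' \<longrightarrow>
                   expect Q (stopped_payoff T xi S chi) \<le> expect Q' (stopped_payoff T xi S' chi)"
    proof (intro allI impI)
      fix Q' S' assume PB': "Pbar T F rate P j Q' S'"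
      show "expect Q (stopped_payoff T xi S chi) \<le> expect Q' (stopped_payoff T xi S' chi)"
        unfolding E expect_eq[OF PB' chi] using min Pbar_Dset[OF PB'] by blast
    qed
    moreover have "expect Q (stopped_payoff T xi S chi) \<le> pi_bg T F rate xi j"
      unfolding E pibg by (rule cSup_upper[OF mem bdd])
    ultimately show "\<exists>Q S. Pbar T F rate P j Q S
             \<and> (\<forall>Q' S'. Pbar T F rate P j Q' S' \<longrightarrow>
                   expect Q (stopped_payoff T xi S chi) \<le> expect Q' (stopped_payoff T xi S' chi))
             \<and> expect Q (stopped_payoff T xi S chi) \<le> pi_bg T F rate xi j" using PB by blast
  qed
  define pi where "pi = pi_bg T F rate xi j"
  have approx: "\<exists>chi. mixed_stopping T F chi \<and> (\<forall>L\<in>Dset. pi - inverse (real (Suc n)) < L \<bullet> Zv chi)" for n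
  proof -
    have "pi - inverse (real (Suc n)) < Sup ?S" unfolding pi_def pibg by simp
    then obtain s where s: "s \<in> ?S" "pi - inverse (real (Suc n)) < s" using ne by (blast elim: less_cSupE)
    obtain chi where "mixed_stopping T F chi" "\<forall>L\<in>Dset. s \<le> L \<bullet> Zv chi" using weak[OF s(1)] by blast
    then show ?thesis using s(2) by force
  qed
  then have "\<forall>n. \<exists>chi. mixed_stopping T F chi \<and> (\<forall>L\<in>Dset. pi - inverse (real (Suc n)) < L \<bullet> Zv chi)"
    by blast
  then obtain cs where csa: "\<forall>n. mixed_stopping T F (cs n) \<and> (\<forall>L\<in>Dset. pi - inverse (real (Suc n)) < L \<bullet> Zv (cs n))"
    using choice[of "\<lambda>n chi. mixed_stopping T F chi \<and> (\<forall>L\<in>Dset. pi - inverse (real (Suc n)) < L \<bullet> Zv chi)"]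
    by blast
  have cs1: "mixed_stopping T F (cs n)" for n using csa by blast
  have cs2: "\<forall>L\<in>Dset. pi - inverse (real (Suc n)) < L \<bullet> Zv (cs n)" for n using csa by blast
  have bnd: "(case i of (t,w) \<Rightarrow> cs n t w) \<in> {0..1}" if "i \<in> {..T} \<times> (UNIV::'w set)" for n i
    using that cs1[of n] unfolding mixed_stopping_def by (cases i) auto
  have fin: "finite ({..T} \<times> (UNIV::'w set))" by simp
  obtain r l where r: "strict_mono r"
    and l: "\<forall>i\<in>{..T} \<times> (UNIV::'w set). (\<lambda>n. case i of (t,w) \<Rightarrow> cs (r n) t w) \<longlonglongrightarrow> l i"
    using seq_sub[OF fin, of "\<lambda>n i. case i of (t,w) \<Rightarrow> cs n t w"] bnd by blast
  define chi0 where "chi0 t w = (if t \<le> T then l (t, w) else 0)" for t w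
  have lim: "(\<lambda>n. cs (r n) t w) \<longlonglongrightarrow> chi0 t w" if "t \<le> T" for t w
  proof -
    have "(t, w) \<in> {..T} \<times> (UNIV::'w set)" using that by simp
    then have "(\<lambda>n. case (t, w) of (t,w) \<Rightarrow> cs (r n) t w) \<longlonglongrightarrow> l (t, w)" using l by blast
    then show ?thesis using that unfolding chi0_def by simp
  qed
  have ms0: "mixed_stopping T F chi0"
    unfolding mixed_stopping_def
  proof (intro conjI allI impI)
    fix t assume t: "t \<le> T"
    show "meas F t (chi0 t)" unfolding meas_def
    proof (intro ballI)
      fix A w w' assume A: "A \<in> F t" "w \<in> A" "w' \<in> A"
      have "cs (r n) t w = cs (r n) t w'" for n
        using measD[of t "cs (r n) t" A w w'] cs1[of "r n"] t A unfolding mixed_stopping_def by blast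
      then have "(\<lambda>n. cs (r n) t w) = (\<lambda>n. cs (r n) t w')" by simp
      then show "chi0 t w = chi0 t w'" using lim[OF t, of w] lim[OF t, of w'] LIMSEQ_unique by metis
    qed
  next
    fix t w assume t: "t \<le> T"
    have b: "0 \<le> cs (r n) t w \<and> cs (r n) t w \<le> 1" for n using cs1[of "r n"] t unfolding mixed_stopping_def by blast
    show "0 \<le> chi0 t w" by (rule LIMSEQ_le_const[OF lim[OF t]]) (use b in blast)
    show "chi0 t w \<le> 1" by (rule LIMSEQ_le_const2[OF lim[OF t]]) (use b in blast)
  next
    fix w
    have "(\<lambda>n. \<Sum>t\<le>T. cs (r n) t w) \<longlonglongrightarrow> (\<Sum>t\<le>T. chi0 t w)"
      by (rule tendsto_sum) (use lim in auto)
    moreover have "(\<lambda>n. \<Sum>t\<le>T. cs (r n) t w) = (\<lambda>n. 1)"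
      using cs1 unfolding mixed_stopping_def by auto
    ultimately show "(\<Sum>t\<le>T. chi0 t w) = 1" using LIMSEQ_unique tendsto_const by metis
  qed
  have ge: "pi \<le> L \<bullet> Zv chi0" if L: "L \<in> Dset" for L
  proof (rule LIMSEQ_le)
    have "((\<lambda>n. inverse (real (Suc n))) \<circ> r) \<longlonglongrightarrow> 0"
      by (rule LIMSEQ_subseq_LIMSEQ[OF LIMSEQ_inverse_real_of_nat r])
    then have "(\<lambda>n. inverse (real (Suc (r n)))) \<longlonglongrightarrow> 0" by (simp add: comp_def)
    then show "(\<lambda>n. pi - inverse (real (Suc (r n)))) \<longlonglongrightarrow> pi"
      using tendsto_diff[OF tendsto_const, of _ 0 sequentially pi] by simp
    show "(\<lambda>n. L \<bullet> Zv (cs (r n))) \<longlonglongrightarrow> L \<bullet> Zv chi0"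
      unfolding inner_Zv by (intro tendsto_sum tendsto_mult_right tendsto_intros lim) auto
    show "\<exists>N. \<forall>n\<ge>N. pi - inverse (real (Suc (r n))) \<le> L \<bullet> Zv (cs (r n))"
      using cs2 L by (meson less_imp_le)
  qed
  obtain Lm where Lm: "Lm \<in> Dset" and min: "\<forall>L\<in>Dset. Lm \<bullet> Zv chi0 \<le> L \<bullet> Zv chi0"
    and mem: "Lm \<bullet> Zv chi0 \<in> ?S" using duality[OF ms0] by blast
  have "Lm \<bullet> Zv chi0 \<le> pi" unfolding pi_def pibg by (rule cSup_upper[OF mem bdd])
  then have pe: "pi = Lm \<bullet> Zv chi0" using ge[OF Lm] by simp
  obtain Q0 S0 where PB: "Pbar T F rate P j Q0 S0" and LQ: "Lam Q0 S0 = Lm" using Dset_Pbar[OF Lm] by blast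
  have E: "expect Q0 (stopped_payoff T xi S0 chi0) = Lm \<bullet> Zv chi0" using expect_eq[OF PB ms0] LQ by simp
  have fourth: ?fourth
  proof (intro exI conjI allI impI)
    show "mixed_stopping T F chi0" by (rule ms0)
    show "Pbar T F rate P j Q0 S0" by (rule PB)
    show "pi_bg T F rate xi j = expect Q0 (stopped_payoff T xi S0 chi0)" using pe E unfolding pi_def by simp
    fix Q S assume PB': "Pbar T F rate P j Q S"
    show "expect Q0 (stopped_payoff T xi S0 chi0) \<le> expect Q (stopped_payoff T xi S chi0)"
      unfolding E expect_eq[OF PB' ms0] using min Pbar_Dset[OF PB'] by blast
  qed
  show ?thesis using ne bdd third fourth by blast
qed

end

theorem theorem5p6:
  fixes T :: nat
    and F :: "nat \<Rightarrow> ('w::finite) set set"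
    and P :: "'w \<Rightarrow> real"
    and rate :: "nat \<Rightarrow> 'w \<Rightarrow> 'd::finite \<Rightarrow> 'd \<Rightarrow> real"
    and xi :: "nat \<Rightarrow> 'w \<Rightarrow> real^'d"
    and j :: 'd
  assumes "filtration T F"
    and "\<forall>w. P w > 0" and "(\<Sum>w\<in>UNIV. P w) = 1"
    and "exchange_rates T F rate"
    and "no_arbitrage T F rate"
    and "american_option T F xi"
  shows "pi_bg_set T F rate xi j \<noteq> {} \<and> bdd_above (pi_bg_set T F rate xi j)
    \<and> (\<forall>chi. mixed_stopping T F chi \<longrightarrow>
          (\<exists>Q S. Pbar T F rate P j Q S
             \<and> (\<forall>Q' S'. Pbar T F rate P j Q' S' \<longrightarrow>
                   expect Q (stopped_payoff T xi S chi) \<le> expect Q' (stopped_payoff T xi S' chi))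
             \<and> expect Q (stopped_payoff T xi S chi) \<le> pi_bg T F rate xi j))
    \<and> (\<exists>chi0 Q0 S0. mixed_stopping T F chi0 \<and> Pbar T F rate P j Q0 S0
          \<and> pi_bg T F rate xi j = expect Q0 (stopped_payoff T xi S0 chi0)
          \<and> (\<forall>Q S. Pbar T F rate P j Q S \<longrightarrow>
                expect Q0 (stopped_payoff T xi S0 chi0) \<le> expect Q (stopped_payoff T xi S chi0)))"
proof -
  interpret mkt T F P rate xi j
    by unfold_locales (use assms in auto)
  show ?thesis by (rule main)
qed

end
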